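(* For the next-symbol prediction task $\mathrm{Learn}(n,N,q_{NSP},\pi)$, $$I(X_S;P\mid K)\le \mu_1 n\cdot\frac{d+1}{2}\cdot(1-h(\delta/2))+\mu_1 n\log N.$$
   Context: Learning task $\mathrm{Learn}(n,N,q_c,\pi)$: a problem instance $P=(D,C)$ with $C=(C_1,\dots,C_N)$ i.i.d. from $q_c$ and $D(j)=\delta_j/\sum_i\delta_i$ with $\delta_j$ i.i.d. uniform over the entries of $\pi$; the data set $X$ consists of $n$ i.i.d. examples drawn by picking $j\sim D$ then drawing from subpopulation $j$. $X_S$ is the set of singletons (examples that are the unique representative of their subpopulation in $X$), $K=|X_S|$, $\mu_1=\mathbb E[K]/n$. Component distribution $q_{NSP}$ (for $d\ge 1$, $\delta\in[0,1)$): subpopulation $j$ has a uniform reference string $c_j\in\{0,1\}^d$; an example from $j$ has $\ell$ uniform in $\{0,\dots,d-1\}$, feature $(j,z)$ with $z=\mathrm{BSC}_{\delta/2}(c_j(1{:}\ell))$ and label $y=\mathrm{BSC}_{\delta/2}(c_j(\ell+1))$; $\mathrm{BSC}_p$ flips each bit independently w.p. $p$. $h$ is binary entropy, logs base 2. *)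

theory Defs
  imports "HOL-Probability.Probability"
begin

text \<open>Binary entropy in bits (with 0 log 0 = 0, which holds since ln 0 = 0 in Isabelle).\<close>
definition bin_entropy :: "real \<Rightarrow> real" where
  "bin_entropy p = - p * log 2 p - (1 - p) * log 2 (1 - p)"

definition cond_mutual_info ::
  "real \<Rightarrow> 'w pmf \<Rightarrow> ('w \<Rightarrow> 'x) \<Rightarrow> ('w \<Rightarrow> 'y) \<Rightarrow> ('w \<Rightarrow> 'z) \<Rightarrow> real" where
  "cond_mutual_info b p X Y Z =
     (let J = map_pmf (\<lambda>w. (X w, Y w, Z w)) p;
          PXZ = map_pmf (\<lambda>w. (X w, Z w)) p;
          PYZ = map_pmf (\<lambda>w. (Y w, Z w)) p;
          PZ = map_pmf Z p
      in \<Sum>\<^sub>\<infinity>(x, y, z)\<in>set_pmf J.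
           pmf J (x, y, z) * log b (pmf J (x, y, z) * pmf PZ z / (pmf PXZ (x, z) * pmf PYZ (y, z))))"

fun iid_list :: "nat \<Rightarrow> 'a pmf \<Rightarrow> 'a list pmf" where
  "iid_list 0 q = return_pmf []"
| "iid_list (Suc m) q = do { a \<leftarrow> q; as \<leftarrow> iid_list m q; return_pmf (a # as) }"

definition bsc :: "real \<Rightarrow> bool \<Rightarrow> bool pmf" where
  "bsc p b = map_pmf (\<lambda>flip. b \<noteq> flip) (bernoulli_pmf p)"

fun bsc_list :: "real \<Rightarrow> bool list \<Rightarrow> bool list pmf" where
  "bsc_list p [] = return_pmf []"
| "bsc_list p (b # bs) = do { b' \<leftarrow> bsc p b; bs' \<leftarrow> bsc_list p bs; return_pmf (b' # bs') }"

text \<open>Component distribution of a subpopulation with reference string c (length d), for q_NSP: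
  an example is (z, y) where z = BSC(c(1:l)) and y = BSC(c(l+1)), l uniform in {0..d-1};
  the feature is (j, z) once the subpopulation index j is attached. Indices are 0-based.\<close>
definition nsp_component :: "nat \<Rightarrow> real \<Rightarrow> bool list \<Rightarrow> (bool list \<times> bool) pmf" where
  "nsp_component d \<delta> c = do {
      l \<leftarrow> pmf_of_set {0..<d};
      z \<leftarrow> bsc_list (\<delta> / 2) (take l c);
      y \<leftarrow> bsc (\<delta> / 2) (c ! l);
      return_pmf (z, y) }"

definition q_NSP :: "nat \<Rightarrow> real \<Rightarrow> (bool list \<times> bool) pmf pmf" where
  "q_NSP d \<delta> = map_pmf (nsp_component d \<delta>) (pmf_of_set {c. length c = d})"

text \<open>The learning task Learn(n, N, q_c, pi): joint distribution of the problem instance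
  P = (D, C) (D given as the list [D(0),...,D(N-1)], C the list of N component
  distributions) and the data set X, a list of n examples (j, e) with j the
  subpopulation index and e the draw from subpopulation j.\<close>
definition learn_pmf :: "nat \<Rightarrow> nat \<Rightarrow> 'e pmf pmf \<Rightarrow> real list \<Rightarrow>
    ((real list \<times> 'e pmf list) \<times> (nat \<times> 'e) list) pmf" where
  "learn_pmf n N qc \<pi> = do {
      C \<leftarrow> iid_list N qc;
      \<delta>s \<leftarrow> iid_list N (map_pmf (\<lambda>i. \<pi> ! i) (pmf_of_set {..<length \<pi>}));
      let D = map (\<lambda>x. x / sum_list \<delta>s) \<delta>s;
      X \<leftarrow> iid_list n (do {
              j \<leftarrow> embed_pmf (\<lambda>j. if j < N then D ! j else 0);
              e \<leftarrow> C ! j;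
              return_pmf (j, e) });
      return_pmf ((D, C), X) }"

definition singletons :: "(nat \<times> 'e) list \<Rightarrow> (nat \<times> 'e) set" where
  "singletons X = {x \<in> set X. length (filter (\<lambda>y. fst y = fst x) X) = 1}"

end

theory Submission
  imports Defs
begin

lemma log_le_minus_one_div: "b > 1 \<Longrightarrow> x > 0 \<Longrightarrow> log b x \<le> (x - 1) / ln b"
  by (simp add: log_def divide_right_mono ln_le_minus_one)

lemma expectation_finite:
  fixes f :: "'a \<Rightarrow> real"
  shows "finite (set_pmf M) \<Longrightarrow> measure_pmf.expectation M f = (\<Sum>a\<in>set_pmf M. pmf M a * f a)"
  by (subst integral_measure_pmf[of "set_pmf M"]) auto

lemma key_ineq:
  fixes a pz pxz pyz r q b :: real
  assumes "b > 1" "a > 0" "pz > 0" "pxz > 0" "pyz > 0" "r > 0" "q > 0" "a \<le> r * pyz"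
  shows "a * log b (a*pz/(pxz*pyz)) \<le> a * log b (r/q) + a * ((pz*q/pxz) - 1)/ln b"
proof -
  define v where "v = a*pz*q/(pxz*pyz*r)"
  have vpos: "v > 0" using assms by (simp add: v_def)
  have "a*pz/(pxz*pyz) = (r/q) * v" using assms by (simp add: v_def field_simps)
  moreover have "log b ((r / q) * v) = log b (r/q) + log b v"
    using assms vpos by (intro log_mult_pos) auto
  ultimately have eq: "log b (a*pz/(pxz*pyz)) = log b (r/q) + log b v" by simp
  have "a/(pyz*r) \<le> 1" using assms by (simp add: field_simps)
  have "v = (a/(pyz*r)) * (pz*q/pxz)" using assms unfolding v_def by (simp add: field_simps)
  also have "\<dots> \<le> 1 * (pz*q/pxz)"
    using \<open>a/(pyz*r) \<le> 1\<close> assms by (intro mult_right_mono) auto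
  finally have "v \<le> pz*q/pxz" by simp
  hence "(v - 1)/ln b \<le> (pz*q/pxz - 1)/ln b"
    using assms by (intro divide_right_mono) auto
  hence "log b v \<le> (pz*q/pxz - 1)/ln b"
    using log_le_minus_one_div[OF assms(1) vpos] by linarith
  then show ?thesis
  proof -
    have "a * log b (a*pz/(pxz*pyz)) = a * log b (r/q) + a * log b v" using eq by (simp add: distrib_left)
    also have "a * log b v \<le> a * ((pz*q/pxz - 1)/ln b)"
      using \<open>log b v \<le> _\<close> assms by (intro mult_left_mono) auto
    finally show ?thesis by simp
  qed
qed

lemma sum_pmf_le_1: "finite A \<Longrightarrow> (\<Sum>x\<in>A. pmf p x) \<le> 1"
  using measure_measure_pmf_finite[of A p] measure_pmf.prob_le_1[of p A] by simp

lemma cmi_bound: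
  fixes M :: "'w pmf" and X :: "'w \<Rightarrow> 'x" and Y :: "'w \<Rightarrow> 'y" and Z :: "'w \<Rightarrow> 'z"
    and R :: "'x \<Rightarrow> 'y \<Rightarrow> 'z \<Rightarrow> real" and Qd :: "'z \<Rightarrow> 'x pmf"
  assumes fin: "finite (set_pmf M)" and b: "b > 1"
  and Rpos: "\<And>w. w \<in> set_pmf M \<Longrightarrow> R (X w) (Y w) (Z w) > 0"
  and Rbound: "\<And>w. w \<in> set_pmf M \<Longrightarrow> pmf (map_pmf (\<lambda>w. (X w, Y w, Z w)) M) (X w, Y w, Z w)
        \<le> R (X w) (Y w) (Z w) * pmf (map_pmf (\<lambda>w. (Y w, Z w)) M) (Y w, Z w)"
  and Qpos: "\<And>w. w \<in> set_pmf M \<Longrightarrow> pmf (Qd (Z w)) (X w) > 0"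
  shows "cond_mutual_info b M X Y Z \<le>
    measure_pmf.expectation M (\<lambda>w. log b (R (X w) (Y w) (Z w) / pmf (Qd (Z w)) (X w)))"
proof -
  define J where "J = map_pmf (\<lambda>w. (X w, Y w, Z w)) M"
  define PXZ where "PXZ = map_pmf (\<lambda>w. (X w, Z w)) M"
  define PYZ where "PYZ = map_pmf (\<lambda>w. (Y w, Z w)) M"
  define PZ where "PZ = map_pmf Z M"
  define T where "T = set_pmf J"
  have finT: "finite T" using fin by (simp add: T_def J_def)
  define g where "g = (\<lambda>(x,y,z). pmf J (x,y,z) * log b (pmf J (x,y,z) * pmf PZ z / (pmf PXZ (x,z) * pmf PYZ (y,z))))"
  have cmi: "cond_mutual_info b M X Y Z = (\<Sum>t\<in>T. g t)"
    unfolding cond_mutual_info_def Let_def J_def[symmetric] PXZ_def[symmetric] PYZ_def[symmetric]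
      PZ_def[symmetric] T_def[symmetric]
    using finT by (simp add: g_def)
  define L where "L = (\<lambda>(x,y,z). log b (R x y z / pmf (Qd z) x))"
  have E: "measure_pmf.expectation M (\<lambda>w. log b (R (X w) (Y w) (Z w) / pmf (Qd (Z w)) (X w)))
      = (\<Sum>t\<in>T. pmf J t * L t)"
  proof -
    have "measure_pmf.expectation M (\<lambda>w. log b (R (X w) (Y w) (Z w) / pmf (Qd (Z w)) (X w)))
       = measure_pmf.expectation J L" unfolding J_def L_def by simp
    then show ?thesis using finT expectation_finite[of J L] T_def by simp
  qed
  define h where "h = (\<lambda>(x,z). pmf PZ z * pmf (Qd z) x / pmf PXZ (x,z))"
  have step: "g t \<le> pmf J t * L t + pmf J t * (h (fst t, snd (snd t)) - 1) / ln b" if t: "t \<in> T" for t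
  proof -
    from t obtain w where w: "w \<in> set_pmf M" "t = (X w, Y w, Z w)" unfolding T_def J_def by auto
    have p1: "pmf J t > 0" using w unfolding J_def by (simp add: pmf_positive)
    have p2: "pmf PZ (Z w) > 0" using w unfolding PZ_def by (simp add: pmf_positive)
    have p3: "pmf PXZ (X w, Z w) > 0" using w unfolding PXZ_def by (simp add: pmf_positive)
    have p4: "pmf PYZ (Y w, Z w) > 0" using w unfolding PYZ_def by (simp add: pmf_positive)
    show ?thesis using key_ineq[OF b p1[unfolded w(2)] p2 p3 p4 Rpos[OF w(1)] Qpos[OF w(1)]] Rbound[OF w(1)]
      unfolding w(2) g_def L_def h_def J_def PYZ_def by simp
  qed
  have sumh: "(\<Sum>t\<in>T. pmf J t * h (fst t, snd (snd t))) \<le> 1"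
  proof -
    have finPXZ: "finite (set_pmf PXZ)" using fin by (simp add: PXZ_def)
    have finPZ: "finite (set_pmf PZ)" using fin by (simp add: PZ_def)
    have mapJ: "map_pmf (\<lambda>t. (fst t, snd (snd t))) J = PXZ"
      unfolding J_def PXZ_def by (simp add: pmf.map_comp o_def)
    have "(\<Sum>t\<in>T. pmf J t * h (fst t, snd (snd t))) = measure_pmf.expectation J (\<lambda>t. h (fst t, snd (snd t)))"
      using expectation_finite[of J] finT T_def by simp
    also have "\<dots> = measure_pmf.expectation PXZ h"
      unfolding mapJ[symmetric] by simp
    also have "\<dots> = (\<Sum>u\<in>set_pmf PXZ. pmf PXZ u * h u)"
      using expectation_finite[OF finPXZ] by simp
    also have "\<dots> = (\<Sum>u\<in>set_pmf PXZ. pmf PZ (snd u) * pmf (Qd (snd u)) (fst u))"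
      by (intro sum.cong refl) (auto simp: h_def set_pmf_iff)
    also have "\<dots> \<le> (\<Sum>u\<in>fst ` set_pmf PXZ \<times> set_pmf PZ. pmf PZ (snd u) * pmf (Qd (snd u)) (fst u))"
    proof (rule sum_mono2)
      show "finite (fst ` set_pmf PXZ \<times> set_pmf PZ)" using finPXZ finPZ by simp
      show "set_pmf PXZ \<subseteq> fst ` set_pmf PXZ \<times> set_pmf PZ"
        unfolding PXZ_def PZ_def by force
    qed auto
    also have "\<dots> = (\<Sum>x\<in>fst ` set_pmf PXZ. \<Sum>z\<in>set_pmf PZ. pmf PZ z * pmf (Qd z) x)"
      by (simp add: sum.cartesian_product case_prod_beta)
    also have "\<dots> = (\<Sum>z\<in>set_pmf PZ. pmf PZ z * (\<Sum>x\<in>fst ` set_pmf PXZ. pmf (Qd z) x))"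
      by (subst sum.swap) (simp add: sum_distrib_left)
    also have "\<dots> \<le> (\<Sum>z\<in>set_pmf PZ. pmf PZ z * 1)"
      using finPXZ by (intro sum_mono mult_left_mono sum_pmf_le_1) auto
    also have "\<dots> = 1" using sum_pmf_eq_1[OF finPZ] by simp
    finally show ?thesis .
  qed
  have sumJ: "(\<Sum>t\<in>T. pmf J t) = 1" using sum_pmf_eq_1[OF finT] T_def by simp
  have "(\<Sum>t\<in>T. g t) \<le> (\<Sum>t\<in>T. pmf J t * L t + pmf J t * (h (fst t, snd (snd t)) - 1) / ln b)"
    using step by (intro sum_mono) auto
  also have "\<dots> = (\<Sum>t\<in>T. pmf J t * L t) + ((\<Sum>t\<in>T. pmf J t * h (fst t, snd (snd t))) - (\<Sum>t\<in>T. pmf J t)) / ln b"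
    by (simp add: sum.distrib sum_divide_distrib[symmetric] right_diff_distrib sum_subtractf)
  also have "\<dots> \<le> (\<Sum>t\<in>T. pmf J t * L t)"
    using sumh sumJ b by (simp add: divide_nonpos_pos)
  finally show ?thesis using cmi E by simp
qed

lemma measure_bind_pmf:
  "measure (measure_pmf (bind_pmf M f)) A = measure_pmf.expectation M (\<lambda>x. measure (measure_pmf (f x)) A)"
proof -
  have int: "integrable (measure_pmf M) (\<lambda>x. measure (measure_pmf (f x)) A)"
    by (rule measure_pmf.integrable_const_bound[where B=1]) auto
  have "ennreal (measure (measure_pmf (bind_pmf M f)) A) = emeasure (measure_pmf (bind_pmf M f)) A"
    by (simp add: measure_pmf.emeasure_eq_measure)
  also have "\<dots> = (\<integral>\<^sup>+x. ennreal (measure (measure_pmf (f x)) A) \<partial>M)"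
    unfolding emeasure_bind_pmf by (simp add: measure_pmf.emeasure_eq_measure)
  also have "\<dots> = ennreal (measure_pmf.expectation M (\<lambda>x. measure (measure_pmf (f x)) A))"
    by (rule nn_integral_eq_integral[OF int]) auto
  finally show ?thesis by (simp add: integral_nonneg)
qed

fun seqp :: "'a pmf list \<Rightarrow> 'a list pmf" where
  "seqp [] = return_pmf []"
| "seqp (q # qs) = do { a \<leftarrow> q; as \<leftarrow> seqp qs; return_pmf (a # as) }"

lemma set_seqp: "es \<in> set_pmf (seqp qs) \<Longrightarrow> length es = length qs \<and> (\<forall>i<length qs. es!i \<in> set_pmf (qs!i))"
  by (induction qs arbitrary: es) (auto simp: nth_Cons split: nat.splits)

lemma finite_set_seqp: "(\<forall>q\<in>set qs. finite (set_pmf q)) \<Longrightarrow> finite (set_pmf (seqp qs))"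
  by (induction qs) (auto intro!: finite_UN_I)

lemma seqp_nth: "i < length qs \<Longrightarrow> map_pmf (\<lambda>es. es!i) (seqp qs) = qs!i"
proof (induction qs arbitrary: i)
  case Nil then show ?case by simp
next
  case (Cons q qs)
  show ?case
  proof (cases i)
    case 0 then show ?thesis by (simp add: map_bind_pmf bind_return_pmf')
  next
    case (Suc k)
    have "map_pmf (\<lambda>es. es!i) (seqp (q#qs)) = bind_pmf q (\<lambda>a. map_pmf (\<lambda>es. es!k) (seqp qs))"
      using Suc by (simp add: map_bind_pmf map_pmf_def[symmetric] pmf.map_comp o_def)
    also have "\<dots> = qs ! k" using Cons Suc by simp
    finally show ?thesis using Suc by simp
  qed
qed

lemma iid_decomp:
  "iid_list n (bind_pmf Dp (\<lambda>j. bind_pmf (Cf j) (\<lambda>e. return_pmf (j, e)))) =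
   bind_pmf (iid_list n Dp) (\<lambda>js. map_pmf (zip js) (seqp (map Cf js)))"
proof (induction n)
  case 0 then show ?case by (simp add: bind_return_pmf)
next
  case (Suc n)
  show ?case
    apply (simp add: Suc bind_assoc_pmf bind_return_pmf map_pmf_def)
    apply (rule bind_pmf_cong[OF refl])
    apply (subst bind_commute_pmf)
    apply simp
    done
qed

lemma expectation_point: "measure_pmf.expectation q (\<lambda>a. if a = x then c else 0) = pmf q x * (c::real)"
  by (subst integral_measure_pmf_real[where A="{x}"]) (auto split: if_splits)

lemma seqp_prob:
  "I \<subseteq> {..<length qs} \<Longrightarrow>
   measure (measure_pmf (seqp qs)) {es. \<forall>i\<in>I. es!i = u i} = (\<Prod>i\<in>I. pmf (qs!i) (u i))"
proof (induction qs arbitrary: I u)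
  case Nil then show ?case by simp
next
  case (Cons q qs)
  define I' where "I' = {i. Suc i \<in> I}"
  have I': "I' \<subseteq> {..<length qs}" using Cons.prems by (auto simp: I'_def)
  define c where "c = (\<Prod>i\<in>I'. pmf (qs!i) (u (Suc i)))"
  have IH: "measure (measure_pmf (seqp qs)) {es. \<forall>i\<in>I'. es!i = u (Suc i)} = c"
    using Cons.IH[OF I'] by (simp add: c_def)
  have pre: "(Cons a) -` {es. \<forall>i\<in>I. es!i = u i} =
      (if (0 \<in> I \<longrightarrow> a = u 0) then {es. \<forall>i\<in>I'. es!i = u (Suc i)} else {})" for a
    by (auto simp: I'_def nth_Cons split: nat.splits)
  have seq: "seqp (q#qs) = bind_pmf q (\<lambda>a. map_pmf (Cons a) (seqp qs))"
    by (simp add: map_pmf_def)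
  have "measure (measure_pmf (seqp (q#qs))) {es. \<forall>i\<in>I. es!i = u i}
      = measure_pmf.expectation q (\<lambda>a. if (0 \<in> I \<longrightarrow> a = u 0) then c else 0)"
    unfolding seq measure_bind_pmf measure_map_pmf pre
    by (intro Bochner_Integration.integral_cong refl) (auto simp: IH)
  also have "\<dots> = (if 0 \<in> I then pmf q (u 0) else 1) * c"
    by (cases "0 \<in> I") (simp_all add: expectation_point)
  also have "\<dots> = (\<Prod>i\<in>I. pmf ((q#qs)!i) (u i))"
  proof -
    have fin: "finite I'" using I' finite_subset by blast
    have prodS: "(\<Prod>i\<in>Suc ` I'. pmf ((q#qs)!i) (u i)) = c"
      unfolding c_def by (subst prod.reindex) auto
    have Ieq: "I = (if 0 \<in> I then insert 0 (Suc ` I') else Suc ` I')"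
      by (auto simp: I'_def image_iff) (metis not0_implies_Suc)+
    show ?thesis
    proof (cases "0 \<in> I")
      case True
      then have "(\<Prod>i\<in>I. pmf ((q#qs)!i) (u i)) = (\<Prod>i\<in>insert 0 (Suc ` I'). pmf ((q#qs)!i) (u i))"
        using Ieq by simp
      also have "\<dots> = pmf q (u 0) * c" using fin prodS by (subst prod.insert) auto
      finally have "(\<Prod>i\<in>I. pmf ((q#qs)!i) (u i)) = pmf q (u 0) * c" .
      then show ?thesis using True by simp
    next
      case False
      then show ?thesis using Ieq prodS by simp
    qed
  qed
  finally show ?case .
qed

lemma measure_pmf_one: "set_pmf Q \<subseteq> A \<Longrightarrow> measure (measure_pmf Q) A = 1"
proof -
  assume "set_pmf Q \<subseteq> A"
  hence "A \<inter> set_pmf Q = UNIV \<inter> set_pmf Q" by auto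
  hence "measure (measure_pmf Q) A = measure (measure_pmf Q) UNIV"
    by (metis measure_Int_set_pmf)
  thus ?thesis by simp
qed

lemma measure_pmf_zero: "A \<inter> set_pmf Q = {} \<Longrightarrow> measure (measure_pmf Q) A = 0"
  by (metis measure_Int_set_pmf measure_empty)

lemma integral_bind_pmf_fin:
  fixes g :: "'b \<Rightarrow> real"
  assumes "finite (set_pmf A)" "\<And>a. a \<in> set_pmf A \<Longrightarrow> finite (set_pmf (f a))"
  shows "measure_pmf.expectation (bind_pmf A f) g
       = measure_pmf.expectation A (\<lambda>a. measure_pmf.expectation (f a) g)"
proof -
  define B where "B = (\<Union>a\<in>set_pmf A. set_pmf (f a))"
  have finB: "finite B" using assms unfolding B_def by (intro finite_UN_I) auto
  have "measure_pmf.expectation (bind_pmf A f) g = (\<Sum>y\<in>B. g y * pmf (bind_pmf A f) y)"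
    by (rule integral_measure_pmf_real[OF finB]) (auto simp: B_def)
  also have "\<dots> = (\<Sum>y\<in>B. \<Sum>a\<in>set_pmf A. g y * (pmf (f a) y * pmf A a))"
    unfolding pmf_bind
    by (subst integral_measure_pmf_real[where A="set_pmf A"]) (auto simp: assms sum_distrib_left)
  also have "\<dots> = (\<Sum>a\<in>set_pmf A. pmf A a * (\<Sum>y\<in>B. g y * pmf (f a) y))"
    by (subst sum.swap) (simp add: sum_distrib_left mult_ac)
  also have "\<dots> = (\<Sum>a\<in>set_pmf A. pmf A a * measure_pmf.expectation (f a) g)"
  proof (intro sum.cong refl arg_cong2[where f="(*)"])
    fix a assume a: "a \<in> set_pmf A"
    show "(\<Sum>y\<in>B. g y * pmf (f a) y) = measure_pmf.expectation (f a) g"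
      by (rule integral_measure_pmf_real[OF finB, symmetric]) (auto simp: B_def a)
  qed
  also have "\<dots> = measure_pmf.expectation A (\<lambda>a. measure_pmf.expectation (f a) g)"
    by (rule expectation_finite[symmetric]) (rule assms)
  finally show ?thesis .
qed

lemma set_iid_list: "xs \<in> set_pmf (iid_list n q) \<Longrightarrow> length xs = n \<and> set xs \<subseteq> set_pmf q"
  by (induction n arbitrary: xs) fastforce+

lemma finite_set_iid_list: "finite (set_pmf q) \<Longrightarrow> finite (set_pmf (iid_list n q))"
  by (induction n) (auto intro!: finite_UN_I)

lemma pmf_iid_list: "pmf (iid_list (length xs) q) xs = prod_list (map (pmf q) xs)"
proof (induction xs)
  case Nil then show ?case by simp
next
  case (Cons x xs)
  have "iid_list (length (x#xs)) q = bind_pmf q (\<lambda>a. map_pmf (Cons a) (iid_list (length xs) q))"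
    by (simp add: map_pmf_def)
  hence "pmf (iid_list (length (x#xs)) q) (x#xs) =
      measure_pmf.expectation q (\<lambda>a. pmf (map_pmf (Cons a) (iid_list (length xs) q)) (x#xs))"
    by (simp add: pmf_bind)
  also have "\<dots> = measure_pmf.expectation q (\<lambda>a. if a = x then pmf (iid_list (length xs) q) xs else 0)"
  proof (intro Bochner_Integration.integral_cong refl)
    fix a show "pmf (map_pmf (Cons a) (iid_list (length xs) q)) (x#xs) = (if a = x then pmf (iid_list (length xs) q) xs else 0)"
      by (cases "a = x") (auto simp: pmf_map_inj' intro!: pmf_map_outside)
  qed
  also have "\<dots> = pmf q x * pmf (iid_list (length xs) q) xs" by (rule expectation_point)
  finally show ?case using Cons by simp
qed

definition sidx :: "nat list \<Rightarrow> nat set" where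
  "sidx js = {i. i < length js \<and> length (filter (\<lambda>j. j = js!i) js) = 1}"

lemma finite_sidx: "finite (sidx js)"
  by (rule finite_subset[of _ "{..<length js}"]) (auto simp: sidx_def)

lemma len_filter_fst_zip:
  "length es = length js \<Longrightarrow> length (filter (\<lambda>y. fst y = a) (zip js es)) = length (filter (\<lambda>j. j = a) js)"
proof -
  assume l: "length es = length js"
  have "length (filter (\<lambda>y. fst y = a) (zip js es)) = length (map fst (filter (\<lambda>y. fst y = a) (zip js es)))"
    by simp
  also have "map fst (filter (\<lambda>y. fst y = a) (zip js es)) = filter (\<lambda>j. j = a) (map fst (zip js es))"
    by (simp add: filter_map o_def)
  also have "map fst (zip js es) = js" using l by simp
  finally show ?thesis .
qed

lemma singletons_zip:
  "length es = length js \<Longrightarrow> singletons (zip js es) = (\<lambda>i. (js!i, es!i)) ` sidx js"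
  unfolding singletons_def sidx_def
  by (auto simp: len_filter_fst_zip set_zip)

lemma sidx_inj: "inj_on (\<lambda>i. js!i) (sidx js)"
proof (rule inj_onI)
  fix i i' assume i: "i \<in> sidx js" and i': "i' \<in> sidx js" and eq: "js!i = js!i'"
  have "card {k. k < length js \<and> js!k = js!i} = 1"
    using i by (simp add: sidx_def length_filter_conv_card)
  moreover have "i \<in> {k. k < length js \<and> js!k = js!i}" "i' \<in> {k. k < length js \<and> js!k = js!i}"
    using i i' eq by (auto simp: sidx_def)
  ultimately show "i = i'" by (metis card_1_singletonE singletonD)
qed

lemma sidx_inj2: "inj_on (\<lambda>i. (js!i, es!i)) (sidx js)"
  using sidx_inj[of js] by (auto simp: inj_on_def)

lemma card_singletons_zip:
  "length es = length js \<Longrightarrow> card (singletons (zip js es)) = card (sidx js)"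
  by (simp add: singletons_zip card_image sidx_inj2)

lemma expectation_cong_supp:
  fixes f g :: "'a \<Rightarrow> real"
  shows "(\<And>x. x \<in> set_pmf M \<Longrightarrow> f x = g x) \<Longrightarrow> measure_pmf.expectation M f = measure_pmf.expectation M g"
  by (rule integral_cong_AE) (auto simp: AE_measure_pmf_iff)

lemma ptwise_bound:
  fixes Cf :: "nat \<Rightarrow> 'e pmf" and js :: "nat list"
  defines "Q \<equiv> seqp (map Cf js)"
  shows "measure (measure_pmf Q) {es. singletons (zip js es) = s}
     \<le> (\<Prod>x\<in>s. pmf (Cf (fst x)) (snd x)) * measure (measure_pmf Q) {es. card (singletons (zip js es)) = card s}"
proof (cases "\<exists>es0\<in>set_pmf Q. singletons (zip js es0) = s")
  case True
  then obtain es0 where es0: "es0 \<in> set_pmf Q" "singletons (zip js es0) = s" by blast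
  have len0: "length es0 = length js" using set_seqp[OF es0(1)[unfolded Q_def]] by simp
  have s_eq: "s = (\<lambda>i. (js!i, es0!i)) ` sidx js" using es0(2) singletons_zip[OF len0] by simp
  have sub: "{es. singletons (zip js es) = s} \<inter> set_pmf Q \<subseteq> {es. \<forall>i\<in>sidx js. es!i = es0!i}"
  proof (intro subsetI CollectI ballI)
    fix es i assume es': "es \<in> {es. singletons (zip js es) = s} \<inter> set_pmf Q" and i: "i \<in> sidx js"
    have es: "singletons (zip js es) = s" "es \<in> set_pmf Q" using es' by auto
    have len: "length es = length js" using set_seqp[OF es(2)[unfolded Q_def]] by simp
    have "(js!i, es!i) \<in> s" using es(1) singletons_zip[OF len] i by auto
    then obtain i' where i': "i' \<in> sidx js" "(js!i, es!i) = (js!i', es0!i')" using s_eq by auto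
    hence "i = i'" using sidx_inj[of js] i by (auto simp: inj_on_def)
    thus "es!i = es0!i" using i' by simp
  qed
  have "measure (measure_pmf Q) {es. singletons (zip js es) = s}
      = measure (measure_pmf Q) ({es. singletons (zip js es) = s} \<inter> set_pmf Q)"
    by (simp add: measure_Int_set_pmf)
  also have "\<dots> \<le> measure (measure_pmf Q) {es. \<forall>i\<in>sidx js. es!i = es0!i}"
    by (rule measure_pmf.finite_measure_mono[OF sub]) simp
  also have "\<dots> = (\<Prod>i\<in>sidx js. pmf ((map Cf js)!i) (es0!i))"
    unfolding Q_def by (rule seqp_prob) (auto simp: sidx_def)
  also have "\<dots> = (\<Prod>i\<in>sidx js. pmf (Cf (js!i)) (es0!i))"
    by (intro prod.cong refl) (auto simp: sidx_def)
  also have "\<dots> = (\<Prod>x\<in>s. pmf (Cf (fst x)) (snd x))"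
    unfolding s_eq by (subst prod.reindex[OF sidx_inj2]) simp
  also have "\<dots> = (\<Prod>x\<in>s. pmf (Cf (fst x)) (snd x)) * measure (measure_pmf Q) {es. card (singletons (zip js es)) = card s}"
  proof -
    have "set_pmf Q \<subseteq> {es. card (singletons (zip js es)) = card s}"
    proof
      fix es assume es: "es \<in> set_pmf Q"
      have len: "length es = length js" using set_seqp[OF es[unfolded Q_def]] by simp
      show "es \<in> {es. card (singletons (zip js es)) = card s}"
        using card_singletons_zip[OF len] card_singletons_zip[OF len0] es0(2) by simp
    qed
    thus ?thesis by (simp add: measure_pmf_one)
  qed
  finally show ?thesis .
next
  case False
  hence "measure (measure_pmf Q) {es. singletons (zip js es) = s} = 0"
    by (intro measure_pmf_zero) auto
  moreover have "(\<Prod>x\<in>s. pmf (Cf (fst x)) (snd x)) \<ge> 0" by (intro prod_nonneg) auto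
  ultimately show ?thesis by simp
qed

lemma S_bound:
  fixes Dp :: "nat pmf" and Cf :: "nat \<Rightarrow> 'e pmf" and n :: nat
  defines "Xd \<equiv> iid_list n (bind_pmf Dp (\<lambda>j. bind_pmf (Cf j) (\<lambda>e. return_pmf (j, e))))"
  shows "measure (measure_pmf Xd) {X. singletons X = s}
     \<le> (\<Prod>x\<in>s. pmf (Cf (fst x)) (snd x)) * measure (measure_pmf Xd) {X. card (singletons X) = card s}"
proof -
  define R where "R = (\<Prod>x\<in>s. pmf (Cf (fst x)) (snd x))"
  have "measure (measure_pmf Xd) {X. singletons X = s}
     = measure_pmf.expectation (iid_list n Dp) (\<lambda>js. measure (measure_pmf (seqp (map Cf js))) {es. singletons (zip js es) = s})"
    unfolding Xd_def iid_decomp measure_bind_pmf by simp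
  also have "\<dots> \<le> measure_pmf.expectation (iid_list n Dp) (\<lambda>js. R * measure (measure_pmf (seqp (map Cf js))) {es. card (singletons (zip js es)) = card s})"
  proof (rule integral_mono)
    show "integrable (measure_pmf (iid_list n Dp)) (\<lambda>js. measure (measure_pmf (seqp (map Cf js))) {es. singletons (zip js es) = s})"
      by (rule measure_pmf.integrable_const_bound[where B=1]) auto
    show "integrable (measure_pmf (iid_list n Dp)) (\<lambda>js. R * measure (measure_pmf (seqp (map Cf js))) {es. card (singletons (zip js es)) = card s})"
      by (intro integrable_mult_right measure_pmf.integrable_const_bound[where B=1]) auto
  qed (auto simp: R_def ptwise_bound)
  also have "\<dots> = R * measure (measure_pmf Xd) {X. card (singletons X) = card s}"
    unfolding Xd_def iid_decomp measure_bind_pmf by simp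
  finally show ?thesis by (simp add: R_def)
qed

lemma S_expect:
  fixes Dp :: "nat pmf" and Cf :: "nat \<Rightarrow> 'e pmf" and F :: "nat \<times> 'e \<Rightarrow> real" and n :: nat
  defines "Xd \<equiv> iid_list n (bind_pmf Dp (\<lambda>j. bind_pmf (Cf j) (\<lambda>e. return_pmf (j, e))))"
  assumes finD: "finite (set_pmf Dp)" and finC: "\<And>j. j \<in> set_pmf Dp \<Longrightarrow> finite (set_pmf (Cf j))"
    and hF: "\<And>j. j \<in> set_pmf Dp \<Longrightarrow> measure_pmf.expectation (Cf j) (\<lambda>e. F (j, e)) = c"
  shows "measure_pmf.expectation Xd (\<lambda>X. \<Sum>x\<in>singletons X. F x)
       = c * measure_pmf.expectation Xd (\<lambda>X. real (card (singletons X)))"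
proof -
  have finI: "finite (set_pmf (iid_list n Dp))" by (rule finite_set_iid_list[OF finD])
  have suppjs: "length js = n \<and> set js \<subseteq> set_pmf Dp" if "js \<in> set_pmf (iid_list n Dp)" for js
    using set_iid_list[OF that] .
  have finQ: "finite (set_pmf (seqp (map Cf js)))" if "js \<in> set_pmf (iid_list n Dp)" for js
    using suppjs[OF that] finC by (intro finite_set_seqp) auto
  have finQ': "finite (set_pmf (map_pmf (zip js) (seqp (map Cf js))))" if "js \<in> set_pmf (iid_list n Dp)" for js
    using finQ[OF that] by simp
  have inner1: "measure_pmf.expectation (map_pmf (zip js) (seqp (map Cf js))) (\<lambda>X. \<Sum>x\<in>singletons X. F x)
      = c * real (card (sidx js))" if js: "js \<in> set_pmf (iid_list n Dp)" for js
  proof -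
    define Q where "Q = seqp (map Cf js)"
    have "measure_pmf.expectation (map_pmf (zip js) Q) (\<lambda>X. \<Sum>x\<in>singletons X. F x)
        = measure_pmf.expectation Q (\<lambda>es. \<Sum>x\<in>singletons (zip js es). F x)" by simp
    also have "\<dots> = measure_pmf.expectation Q (\<lambda>es. \<Sum>i\<in>sidx js. F (js!i, es!i))"
    proof (rule expectation_cong_supp)
      fix es assume "es \<in> set_pmf Q"
      hence len: "length es = length js" using set_seqp unfolding Q_def by fastforce
      show "(\<Sum>x\<in>singletons (zip js es). F x) = (\<Sum>i\<in>sidx js. F (js!i, es!i))"
        unfolding singletons_zip[OF len] by (subst sum.reindex[OF sidx_inj2]) simp
    qed
    also have "\<dots> = (\<Sum>i\<in>sidx js. measure_pmf.expectation Q (\<lambda>es. F (js!i, es!i)))"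
      by (rule Bochner_Integration.integral_sum) (auto intro: integrable_measure_pmf_finite finQ[OF js] simp: Q_def)
    also have "\<dots> = (\<Sum>i\<in>sidx js. c)"
    proof (intro sum.cong refl)
      fix i assume i: "i \<in> sidx js"
      hence il: "i < length js" by (simp add: sidx_def)
      have "measure_pmf.expectation Q (\<lambda>es. F (js!i, es!i))
          = measure_pmf.expectation (map_pmf (\<lambda>es. es!i) Q) (\<lambda>e. F (js!i, e))" by simp
      also have "map_pmf (\<lambda>es. es!i) Q = Cf (js!i)" unfolding Q_def using il by (simp add: seqp_nth)
      also have "measure_pmf.expectation (Cf (js!i)) (\<lambda>e. F (js!i, e)) = c"
        using hF suppjs[OF js] il nth_mem by blast
      finally show "measure_pmf.expectation Q (\<lambda>es. F (js!i, es!i)) = c" .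
    qed
    finally show ?thesis unfolding Q_def by simp
  qed
  have inner2: "measure_pmf.expectation (map_pmf (zip js) (seqp (map Cf js))) (\<lambda>X. real (card (singletons X)))
      = real (card (sidx js))" if js: "js \<in> set_pmf (iid_list n Dp)" for js
  proof -
    have "measure_pmf.expectation (map_pmf (zip js) (seqp (map Cf js))) (\<lambda>X. real (card (singletons X)))
       = measure_pmf.expectation (seqp (map Cf js)) (\<lambda>es. real (card (sidx js)))"
      unfolding integral_map_pmf
    proof (rule expectation_cong_supp)
      fix es assume "es \<in> set_pmf (seqp (map Cf js))"
      hence len: "length es = length js" using set_seqp by fastforce
      show "real (card (singletons (zip js es))) = real (card (sidx js))"
        by (simp add: card_singletons_zip[OF len])
    qed
    thus ?thesis by simp
  qed
  have "measure_pmf.expectation Xd (\<lambda>X. \<Sum>x\<in>singletons X. F x)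
      = measure_pmf.expectation (iid_list n Dp) (\<lambda>js. measure_pmf.expectation (map_pmf (zip js) (seqp (map Cf js))) (\<lambda>X. \<Sum>x\<in>singletons X. F x))"
    unfolding Xd_def iid_decomp by (rule integral_bind_pmf_fin[OF finI finQ'])
  also have "\<dots> = measure_pmf.expectation (iid_list n Dp) (\<lambda>js. c * real (card (sidx js)))"
    by (rule expectation_cong_supp) (rule inner1)
  also have "\<dots> = c * measure_pmf.expectation (iid_list n Dp) (\<lambda>js. real (card (sidx js)))" by simp
  also have "measure_pmf.expectation (iid_list n Dp) (\<lambda>js. real (card (sidx js)))
      = measure_pmf.expectation (iid_list n Dp) (\<lambda>js. measure_pmf.expectation (map_pmf (zip js) (seqp (map Cf js))) (\<lambda>X. real (card (singletons X))))"
    by (rule expectation_cong_supp) (rule inner2[symmetric])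
  also have "\<dots> = measure_pmf.expectation Xd (\<lambda>X. real (card (singletons X)))"
    unfolding Xd_def iid_decomp by (rule integral_bind_pmf_fin[OF finI finQ', symmetric])
  finally show ?thesis .
qed

declare bsc_list.simps(2)[simp del]

lemma pmf_bsc: "0 \<le> p \<Longrightarrow> p \<le> 1 \<Longrightarrow> pmf (bsc p b) b' = (if b' = b then 1 - p else p)"
proof -
  assume p: "0 \<le> p" "p \<le> 1"
  have inj: "inj (\<lambda>flip::bool. b \<noteq> flip)" by (auto simp: inj_def)
  have "pmf (bsc p b) b' = pmf (map_pmf (\<lambda>flip. b \<noteq> flip) (bernoulli_pmf p)) ((\<lambda>flip. b \<noteq> flip) (b \<noteq> b'))"
    unfolding bsc_def by (cases b; cases b') simp_all
  also have "\<dots> = pmf (bernoulli_pmf p) (b \<noteq> b')" by (rule pmf_map_inj'[OF inj])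
  finally have "pmf (bsc p b) b' = pmf (bernoulli_pmf p) (b \<noteq> b')" .
  thus ?thesis using p by (cases b; cases b') auto
qed

lemma finite_set_bool_pmf: "finite (set_pmf (q :: bool pmf))"
  by (rule finite_subset[of _ UNIV]) auto

lemma bsc_list_cons: "bsc_list p (c#cs) = bind_pmf (bsc p c) (\<lambda>b'. map_pmf (Cons b') (bsc_list p cs))"
  by (simp add: map_pmf_def bsc_list.simps)

lemma pmf_cons_bind: "pmf (bind_pmf A (\<lambda>a. map_pmf (Cons a) B)) (x#xs) = pmf A x * pmf B xs"
proof -
  have "pmf (bind_pmf A (\<lambda>a. map_pmf (Cons a) B)) (x#xs) =
      measure_pmf.expectation A (\<lambda>a. pmf (map_pmf (Cons a) B) (x#xs))"
    by (simp add: pmf_bind)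
  also have "\<dots> = measure_pmf.expectation A (\<lambda>a. if a = x then pmf B xs else 0)"
  proof (intro Bochner_Integration.integral_cong refl)
    fix a show "pmf (map_pmf (Cons a) B) (x#xs) = (if a = x then pmf B xs else 0)"
      by (cases "a = x") (auto simp: pmf_map_inj' intro!: pmf_map_outside)
  qed
  also have "\<dots> = pmf A x * pmf B xs" by (rule expectation_point)
  finally show ?thesis .
qed

lemma set_bsc_list: "z \<in> set_pmf (bsc_list p cs) \<Longrightarrow> length z = length cs"
  by (induction cs arbitrary: z) (auto simp: bsc_list.simps)

lemma pmf_bsc_list_len: "length z \<noteq> length cs \<Longrightarrow> pmf (bsc_list p cs) z = 0"
  using set_bsc_list by (metis set_pmf_iff)

lemma finite_set_bsc_list: "finite (set_pmf (bsc_list p cs))"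
proof (rule finite_subset)
  show "set_pmf (bsc_list p cs) \<subseteq> {z. set z \<subseteq> UNIV \<and> length z = length cs}"
    using set_bsc_list by auto
  show "finite {z::bool list. set z \<subseteq> UNIV \<and> length z = length cs}"
    by (rule finite_lists_length_eq) simp
qed

lemma pmf_bsc_list_half: "length z = length cs \<Longrightarrow> pmf (bsc_list (1/2) cs) z = (1/2) ^ length cs"
proof (induction cs arbitrary: z)
  case Nil then show ?case by simp
next
  case (Cons c cs)
  obtain b zs where z: "z = b # zs" using Cons.prems by (cases z) auto
  have e1: "pmf (bsc_list (1/2) (c#cs)) z = pmf (bsc (1/2) c) b * pmf (bsc_list (1/2) cs) zs"
    unfolding z bsc_list_cons pmf_cons_bind ..
  have e2: "pmf (bsc (1/2) c) b = 1/2" by (simp add: pmf_bsc)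
  have e3: "pmf (bsc_list (1/2) cs) zs = (1/2)^length cs" using Cons.IH Cons.prems z by simp
  have "pmf (bsc_list (1/2) (c#cs)) z = 1/2 * (1/2)^length cs" unfolding e1 e2 e3 ..
  thus ?case by simp
qed

lemma entropy_bsc:
  assumes "0 \<le> p" "p \<le> 1"
  shows "measure_pmf.expectation (bsc p c) (\<lambda>b'. log 2 (pmf (bsc p c) b')) = - bin_entropy p"
proof -
  define f where "f = (\<lambda>b'. log 2 (pmf (bsc p c) b'))"
  have "measure_pmf.expectation (bsc p c) f = measure_pmf.expectation (bernoulli_pmf p) (\<lambda>flip. f (c \<noteq> flip))"
    unfolding bsc_def[of p c] by simp
  also have "\<dots> = f (c \<noteq> True) * p + f (c \<noteq> False) * (1 - p)" using assms by simp
  also have "\<dots> = - bin_entropy p"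
  proof -
    have f1: "f c = log 2 (1 - p)" unfolding f_def using assms by (simp add: pmf_bsc)
    have f2: "f (\<not> c) = log 2 p" unfolding f_def using assms by (simp add: pmf_bsc)
    have g1: "f (c \<noteq> True) = log 2 p" using f2 by simp
    have g2: "f (c \<noteq> False) = log 2 (1 - p)" using f1 by simp
    show ?thesis unfolding g1 g2 bin_entropy_def by (simp add: algebra_simps)
  qed
  finally show ?thesis unfolding f_def .
qed

lemma entropy_bsc_list:
  assumes "0 \<le> p" "p \<le> 1"
  shows "measure_pmf.expectation (bsc_list p cs) (\<lambda>z. log 2 (pmf (bsc_list p cs) z))
       = - real (length cs) * bin_entropy p"
proof (induction cs)
  case Nil then show ?case by simp
next
  case (Cons c cs)
  have "measure_pmf.expectation (bsc_list p (c#cs)) (\<lambda>z. log 2 (pmf (bsc_list p (c#cs)) z))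
      = measure_pmf.expectation (bsc p c) (\<lambda>b'. measure_pmf.expectation (bsc_list p cs)
            (\<lambda>z. log 2 (pmf (bsc_list p (c#cs)) (b'#z))))"
  proof -
    define g where "g = (\<lambda>z. log 2 (pmf (bsc_list p (c#cs)) z))"
    have "measure_pmf.expectation (bsc_list p (c#cs)) g
      = measure_pmf.expectation (bind_pmf (bsc p c) (\<lambda>b'. map_pmf (Cons b') (bsc_list p cs))) g"
      by (simp only: bsc_list_cons)
    also have "\<dots> = measure_pmf.expectation (bsc p c) (\<lambda>b'. measure_pmf.expectation (map_pmf (Cons b') (bsc_list p cs)) g)"
      by (rule integral_bind_pmf_fin) (simp_all only: finite_set_bool_pmf set_map_pmf finite_set_bsc_list finite_imageI)
    finally show ?thesis unfolding g_def by (simp only: integral_map_pmf)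
  qed
  also have "\<dots> = measure_pmf.expectation (bsc p c) (\<lambda>b'. measure_pmf.expectation (bsc_list p cs)
            (\<lambda>z. log 2 (pmf (bsc p c) b') + log 2 (pmf (bsc_list p cs) z)))"
  proof (rule expectation_cong_supp)
    fix b' assume b': "b' \<in> set_pmf (bsc p c)"
    show "measure_pmf.expectation (bsc_list p cs) (\<lambda>z. log 2 (pmf (bsc_list p (c#cs)) (b'#z)))
       = measure_pmf.expectation (bsc_list p cs) (\<lambda>z. log 2 (pmf (bsc p c) b') + log 2 (pmf (bsc_list p cs) z))"
    proof (rule expectation_cong_supp)
      fix z assume z: "z \<in> set_pmf (bsc_list p cs)"
      have "pmf (bsc p c) b' > 0" "pmf (bsc_list p cs) z > 0" using b' z by (simp_all add: pmf_positive)
      thus "log 2 (pmf (bsc_list p (c#cs)) (b'#z)) = log 2 (pmf (bsc p c) b') + log 2 (pmf (bsc_list p cs) z)"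
        unfolding bsc_list_cons pmf_cons_bind by (rule log_mult_pos)
    qed
  qed
  also have "\<dots> = measure_pmf.expectation (bsc p c) (\<lambda>b'. log 2 (pmf (bsc p c) b')
        + measure_pmf.expectation (bsc_list p cs) (\<lambda>z. log 2 (pmf (bsc_list p cs) z)))"
    by (subst Bochner_Integration.integral_add)
       (simp_all del: bsc_list.simps add: integrable_measure_pmf_finite finite_set_bsc_list)
  also have "\<dots> = - bin_entropy p - real (length cs) * bin_entropy p"
    using Cons assms entropy_bsc[OF assms]
    by (subst Bochner_Integration.integral_add) (simp_all del: bsc_list.simps add: integrable_measure_pmf_finite finite_set_bool_pmf)
  finally show ?case by (simp del: bsc_list.simps add: algebra_simps)
qed

lemma nsp_pair: "nsp_component d \<delta> c = bind_pmf (pmf_of_set {0..<d})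
    (\<lambda>l. pair_pmf (bsc_list (\<delta>/2) (take l c)) (bsc (\<delta>/2) (c!l)))"
  unfolding nsp_component_def pair_pmf_def by simp

lemma pmf_nsp:
  assumes "length c = d" "d \<ge> 1"
  shows "pmf (nsp_component d \<delta> c) (z, y) = (if length z < d then
      pmf (bsc_list (\<delta>/2) (take (length z) c)) z * pmf (bsc (\<delta>/2) (c ! length z)) y / d else 0)"
proof -
  define t where "t = (\<lambda>l. pmf (bsc_list (\<delta>/2) (take l c)) z * pmf (bsc (\<delta>/2) (c ! l)) y)"
  have "pmf (nsp_component d \<delta> c) (z, y) = (\<Sum>l\<in>{0..<d}. t l) / d"
    unfolding nsp_pair using assms by (subst pmf_bind_pmf_of_set) (auto simp: pmf_pair t_def)
  also have "(\<Sum>l\<in>{0..<d}. t l) = (\<Sum>l\<in>{0..<d}. if l = length z then t (length z) else 0)"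
  proof (intro sum.cong refl)
    fix l assume l: "l \<in> {0..<d}"
    show "t l = (if l = length z then t (length z) else 0)"
    proof (cases "l = length z")
      case False
      hence "length z \<noteq> length (take l c)" using l assms by simp
      thus ?thesis using False by (simp add: t_def pmf_bsc_list_len)
    qed simp
  qed
  also have "\<dots> = (if length z < d then t (length z) else 0)" by simp
  finally show ?thesis by (simp add: t_def)
qed

lemma sum_gauss_real: "(\<Sum>l\<in>{0..<d}. real l + 1) = real d * (real d + 1) / 2"
  by (induction d) (simp_all add: field_simps)

lemma finite_set_nsp: "finite (set_pmf (nsp_component d \<delta> c))"
proof -
  have "set_pmf (nsp_component d \<delta> c) \<subseteq> (\<Union>l\<in>{..length c}. {z. set z \<subseteq> UNIV \<and> length z = l} \<times> UNIV)"
    unfolding nsp_component_def by (auto dest!: set_bsc_list)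
  moreover have "finite (\<Union>l\<in>{..length c}. {z::bool list. set z \<subseteq> UNIV \<and> length z = l} \<times> (UNIV::bool set))"
    by (intro finite_UN_I finite_cartesian_product finite_lists_length_eq) auto
  ultimately show ?thesis by (rule finite_subset)
qed

lemma kl_nsp:
  assumes c: "length c = d" and d: "d \<ge> 1" and dl: "0 \<le> \<delta>" "\<delta> \<le> 1"
  shows "measure_pmf.expectation (nsp_component d \<delta> c)
      (\<lambda>e. log 2 (pmf (nsp_component d \<delta> c) e / pmf (nsp_component d 1 (replicate d False)) e))
      = (real d + 1) / 2 * (1 - bin_entropy (\<delta>/2))"
proof -
  define p where "p = \<delta>/2"
  have p: "0 \<le> p" "p \<le> 1" using dl by (auto simp: p_def)
  define G where "G = (\<lambda>e. log 2 (pmf (nsp_component d \<delta> c) e / pmf (nsp_component d 1 (replicate d False)) e))"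
  define PL where "PL = (\<lambda>l. pair_pmf (bsc_list p (take l c)) (bsc p (c!l)))"
  have finPL: "finite (set_pmf (PL l))" for l
    by (simp add: PL_def finite_set_bsc_list finite_set_bool_pmf)
  have "measure_pmf.expectation (nsp_component d \<delta> c) G
      = measure_pmf.expectation (bind_pmf (pmf_of_set {0..<d}) PL) G"
    unfolding nsp_pair PL_def p_def ..
  also have "\<dots> = measure_pmf.expectation (pmf_of_set {0..<d}) (\<lambda>l. measure_pmf.expectation (PL l) G)"
    using d by (intro integral_bind_pmf_fin finPL) auto
  also have "\<dots> = measure_pmf.expectation (pmf_of_set {0..<d}) (\<lambda>l. (real l + 1) * (1 - bin_entropy p))"
  proof (rule expectation_cong_supp)
    fix l assume "l \<in> set_pmf (pmf_of_set {0..<d})"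
    hence l: "l < d" using d by auto
    have tl: "length (take l c) = l" using l c by simp
    have "measure_pmf.expectation (PL l) G = measure_pmf.expectation (PL l)
        (\<lambda>e. log 2 (pmf (bsc_list p (take l c)) (fst e)) + log 2 (pmf (bsc p (c!l)) (snd e)) + (real l + 1))"
    proof (rule expectation_cong_supp)
      fix e assume e: "e \<in> set_pmf (PL l)"
      obtain z y where zy: "e = (z, y)" by (cases e)
      have z: "z \<in> set_pmf (bsc_list p (take l c))" and y: "y \<in> set_pmf (bsc p (c!l))"
        using e zy by (auto simp: PL_def)
      have lz: "length z = l" using set_bsc_list[OF z] tl by simp
      define A where "A = pmf (bsc_list p (take l c)) z"
      define B where "B = pmf (bsc p (c!l)) y"
      have A: "A > 0" using z by (simp add: A_def pmf_positive)
      have B: "B > 0" using y by (simp add: B_def pmf_positive)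
      have pN: "pmf (nsp_component d \<delta> c) (z, y) = A * B / d"
        using pmf_nsp[OF c d, of \<delta> z y] lz l by (simp add: A_def B_def p_def)
      have lrep: "length (take l (replicate d False)) = l" using l by simp
      have pQ: "pmf (nsp_component d 1 (replicate d False)) (z, y) = (1/2)^l * (1/2) / d"
        using pmf_nsp[of "replicate d False" d 1 z y] d lz l
        by (simp add: pmf_bsc_list_half lrep pmf_bsc)
      have ratio: "A * B / d / ((1/2)^l * (1/2) / d) = A * (B * 2 ^ (l+1))"
        using d by (simp add: field_simps power_one_over)
      have "G e = log 2 (A * (B * 2 ^ (l+1)))"
        unfolding G_def zy pN pQ ratio ..
      also have "\<dots> = log 2 A + (log 2 B + log 2 (2 ^ (l+1)))"
        using A B by (simp add: log_mult_pos)
      also have "log 2 (2 ^ (l+1)) = real l + 1" by (subst log_pow_cancel) auto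
      finally show "G e = log 2 (pmf (bsc_list p (take l c)) (fst e)) + log 2 (pmf (bsc p (c!l)) (snd e)) + (real l + 1)"
        by (simp add: zy A_def B_def)
    qed
    also have "\<dots> = measure_pmf.expectation (PL l) (\<lambda>e. log 2 (pmf (bsc_list p (take l c)) (fst e)))
        + measure_pmf.expectation (PL l) (\<lambda>e. log 2 (pmf (bsc p (c!l)) (snd e))) + (real l + 1)"
    proof -
      have i: "integrable (measure_pmf (PL l)) f" for f :: "bool list \<times> bool \<Rightarrow> real"
        by (rule integrable_measure_pmf_finite[OF finPL])
      show ?thesis
        by (subst Bochner_Integration.integral_add[OF i i], subst Bochner_Integration.integral_add[OF i i]) simp
    qed
    also have "measure_pmf.expectation (PL l) (\<lambda>e. log 2 (pmf (bsc_list p (take l c)) (fst e))) = - real l * bin_entropy p"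
    proof -
      have "measure_pmf.expectation (PL l) (\<lambda>e. log 2 (pmf (bsc_list p (take l c)) (fst e)))
          = measure_pmf.expectation (map_pmf fst (PL l)) (\<lambda>z. log 2 (pmf (bsc_list p (take l c)) z))"
        by simp
      also have "map_pmf fst (PL l) = bsc_list p (take l c)" by (simp add: PL_def map_fst_pair_pmf)
      finally show ?thesis using entropy_bsc_list[OF p, of "take l c"] tl by simp
    qed
    also have "measure_pmf.expectation (PL l) (\<lambda>e. log 2 (pmf (bsc p (c!l)) (snd e))) = - bin_entropy p"
    proof -
      have "measure_pmf.expectation (PL l) (\<lambda>e. log 2 (pmf (bsc p (c!l)) (snd e)))
          = measure_pmf.expectation (map_pmf snd (PL l)) (\<lambda>y. log 2 (pmf (bsc p (c!l)) y))"
        by simp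
      also have "map_pmf snd (PL l) = bsc p (c!l)" by (simp add: PL_def map_snd_pair_pmf)
      finally show ?thesis using entropy_bsc[OF p] by simp
    qed
    finally show "measure_pmf.expectation (PL l) G = (real l + 1) * (1 - bin_entropy p)"
      by (simp add: algebra_simps)
  qed
  also have "\<dots> = (\<Sum>l\<in>{0..<d}. (real l + 1) * (1 - bin_entropy p)) / d"
    using d by (subst integral_pmf_of_set) auto
  also have "\<dots> = (real d + 1) / 2 * (1 - bin_entropy p)"
    using d by (simp add: sum_distrib_right[symmetric] sum_gauss_real)
  finally show ?thesis unfolding G_def p_def .
qed

definition Pd :: "nat \<Rightarrow> 'e pmf pmf \<Rightarrow> real list \<Rightarrow> (real list \<times> 'e pmf list) pmf" where
  "Pd N q \<pi> = bind_pmf (iid_list N q) (\<lambda>C. bind_pmf (iid_list N (map_pmf (\<lambda>i. \<pi> ! i) (pmf_of_set {..<length \<pi>})))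
      (\<lambda>\<delta>s. return_pmf (map (\<lambda>x. x / sum_list \<delta>s) \<delta>s, C)))"

definition Dpm :: "nat \<Rightarrow> real list \<Rightarrow> nat pmf" where
  "Dpm N D = embed_pmf (\<lambda>j. if j < N then D ! j else 0)"

definition Xd :: "nat \<Rightarrow> nat \<Rightarrow> real list \<Rightarrow> 'e pmf list \<Rightarrow> (nat \<times> 'e) list pmf" where
  "Xd n N D C = iid_list n (bind_pmf (Dpm N D) (\<lambda>j. bind_pmf (C ! j) (\<lambda>e. return_pmf (j, e))))"

lemma learn_struct:
  "learn_pmf n N q \<pi> = bind_pmf (Pd N q \<pi>) (\<lambda>pp. map_pmf (Pair pp) (Xd n N (fst pp) (snd pp)))"
  unfolding learn_pmf_def Pd_def Xd_def Dpm_def Let_def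
  by (simp add: bind_assoc_pmf bind_return_pmf map_pmf_def cong: if_cong)

lemma measure_fst:
  "measure (measure_pmf (bind_pmf A (\<lambda>a. map_pmf (Pair a) (B a)))) {w. fst w = a0 \<and> P (snd w)}
   = pmf A a0 * measure (measure_pmf (B a0)) {x. P x}"
proof -
  have "measure (measure_pmf (bind_pmf A (\<lambda>a. map_pmf (Pair a) (B a)))) {w. fst w = a0 \<and> P (snd w)}
     = measure_pmf.expectation A (\<lambda>a. if a = a0 then measure (measure_pmf (B a0)) {x. P x} else 0)"
    unfolding measure_bind_pmf measure_map_pmf
    by (intro Bochner_Integration.integral_cong refl) (auto simp: vimage_def)
  also have "\<dots> = pmf A a0 * measure (measure_pmf (B a0)) {x. P x}" by (rule expectation_point)
  finally show ?thesis .
qed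

lemma embed_ok:
  fixes \<delta>s :: "real list"
  assumes "length \<delta>s = N" "N \<ge> 1" "\<forall>x\<in>set \<delta>s. x > 0"
  shows "\<And>j. 0 \<le> (\<lambda>j. if j < N then map (\<lambda>x. x / sum_list \<delta>s) \<delta>s ! j else 0) j"
    and "(\<integral>\<^sup>+j. ennreal ((\<lambda>j. if j < N then map (\<lambda>x. x / sum_list \<delta>s) \<delta>s ! j else 0) j) \<partial>count_space UNIV) = 1"
proof -
  have sl: "sum_list \<delta>s = (\<Sum>i<N. \<delta>s ! i)" using assms by (simp add: sum_list_sum_nth atLeast0LessThan)
  have pos: "\<delta>s ! i > 0" if "i < N" for i using assms that by simp
  have Spos: "sum_list \<delta>s > 0" unfolding sl using assms pos by (intro sum_pos) (auto simp: lessThan_empty_iff)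
  show "\<And>j. 0 \<le> (\<lambda>j. if j < N then map (\<lambda>x. x / sum_list \<delta>s) \<delta>s ! j else 0) j"
    using pos Spos assms by (auto intro: less_imp_le)
  have "(\<integral>\<^sup>+j. ennreal ((\<lambda>j. if j < N then map (\<lambda>x. x / sum_list \<delta>s) \<delta>s ! j else 0) j) \<partial>count_space UNIV)
      = (\<Sum>j<N. ennreal (map (\<lambda>x. x / sum_list \<delta>s) \<delta>s ! j))"
    by (subst nn_integral_count_space'[of "{..<N}"]) auto
  also have "\<dots> = ennreal (\<Sum>j<N. \<delta>s ! j / sum_list \<delta>s)"
    using assms pos Spos by (subst sum_ennreal) (auto intro: less_imp_le)
  also have "(\<Sum>j<N. \<delta>s ! j / sum_list \<delta>s) = 1"
    using Spos unfolding sum_divide_distrib[symmetric] sl[symmetric] by simp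
  finally show "(\<integral>\<^sup>+j. ennreal ((\<lambda>j. if j < N then map (\<lambda>x. x / sum_list \<delta>s) \<delta>s ! j else 0) j) \<partial>count_space UNIV) = 1"
    by simp
qed

definition good :: "nat \<Rightarrow> nat \<Rightarrow> real \<Rightarrow> (real list \<times> (bool list \<times> bool) pmf list) \<Rightarrow> bool" where
  "good N d \<delta> pp \<longleftrightarrow> (\<exists>\<delta>s. length \<delta>s = N \<and> (\<forall>x\<in>set \<delta>s. x > 0) \<and> fst pp = map (\<lambda>x. x / sum_list \<delta>s) \<delta>s)
      \<and> length (snd pp) = N \<and> (\<forall>C\<in>set (snd pp). \<exists>cs. length cs = d \<and> C = nsp_component d \<delta> cs)"

lemma finite_lists_d: "finite {c :: bool list. length c = d}"
  using finite_lists_length_eq[of "UNIV :: bool set" d] by simp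

lemma set_q_NSP: "C \<in> set_pmf (q_NSP d \<delta>) \<Longrightarrow> \<exists>cs. length cs = d \<and> C = nsp_component d \<delta> cs"
proof -
  assume C: "C \<in> set_pmf (q_NSP d \<delta>)"
  have ne: "{c :: bool list. length c = d} \<noteq> {}" by (metis (mono_tags) empty_iff length_replicate mem_Collect_eq)
  from C show ?thesis unfolding q_NSP_def using finite_lists_d[of d] ne by auto
qed

lemma finite_q_NSP: "finite (set_pmf (q_NSP d \<delta>))"
proof -
  have ne: "{c :: bool list. length c = d} \<noteq> {}" by (metis (mono_tags) empty_iff length_replicate mem_Collect_eq)
  show ?thesis unfolding q_NSP_def using finite_lists_d[of d] ne by auto
qed

lemma Pd_good:
  assumes "N \<ge> 1" "\<pi> \<noteq> []" "\<forall>x\<in>set \<pi>. x > 0" "pp \<in> set_pmf (Pd N (q_NSP d \<delta>) \<pi>)"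
  shows "good N d \<delta> pp"
proof -
  from assms(4) obtain C \<delta>s where C: "C \<in> set_pmf (iid_list N (q_NSP d \<delta>))"
    and ds: "\<delta>s \<in> set_pmf (iid_list N (map_pmf (\<lambda>i. \<pi> ! i) (pmf_of_set {..<length \<pi>})))"
    and pp: "pp = (map (\<lambda>x. x / sum_list \<delta>s) \<delta>s, C)"
    unfolding Pd_def by auto
  have sp: "set_pmf (pmf_of_set {..<length \<pi>}) = {..<length \<pi>}"
    using assms(2) by (intro set_pmf_of_set) auto
  have ds2: "length \<delta>s = N" "set \<delta>s \<subseteq> (\<lambda>i. \<pi> ! i) ` {..<length \<pi>}"
    using set_iid_list[OF ds] sp by auto
  have "\<forall>x\<in>set \<delta>s. x > 0" using ds2(2) assms(3) by auto
  moreover have "length C = N" "set C \<subseteq> set_pmf (q_NSP d \<delta>)" using set_iid_list[OF C] by auto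
  ultimately show ?thesis unfolding good_def pp using ds2(1) set_q_NSP by fastforce
qed

lemma finite_Pd:
  assumes "\<pi> \<noteq> []"
  shows "finite (set_pmf (Pd N (q_NSP d \<delta>) \<pi>))"
proof -
  have f1: "finite (set_pmf (iid_list N (q_NSP d \<delta>)))" by (rule finite_set_iid_list[OF finite_q_NSP])
  have f2: "finite (set_pmf (iid_list N (map_pmf (\<lambda>i. \<pi> ! i) (pmf_of_set {..<length \<pi>}))))"
    using assms by (intro finite_set_iid_list) (auto simp: lessThan_empty_iff)
  show ?thesis unfolding Pd_def using f1 f2 by (auto intro!: finite_UN_I)
qed

lemma good_Dpm:
  assumes "good N d \<delta> pp" "N \<ge> 1"
  shows "set_pmf (Dpm N (fst pp)) \<subseteq> {..<N}"
proof -
  from assms(1) obtain \<delta>s where ds: "length \<delta>s = N" "\<forall>x\<in>set \<delta>s. x > 0" "fst pp = map (\<lambda>x. x / sum_list \<delta>s) \<delta>s"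
    unfolding good_def by blast
  show ?thesis unfolding Dpm_def ds(3)
    using set_embed_pmf[OF embed_ok(1)[OF ds(1) assms(2) ds(2)] embed_ok(2)[OF ds(1) assms(2) ds(2)]] by auto
qed

lemma good_C:
  assumes "good N d \<delta> pp" "j < N"
  shows "\<exists>cs. length cs = d \<and> snd pp ! j = nsp_component d \<delta> cs"
  using assms unfolding good_def by (metis nth_mem)

lemma finite_Xd:
  assumes "good N d \<delta> pp" "N \<ge> 1"
  shows "finite (set_pmf (Xd n N (fst pp) (snd pp)))"
proof -
  have fD: "finite (set_pmf (Dpm N (fst pp)))" using good_Dpm[OF assms] finite_subset by blast
  have fC: "finite (set_pmf (snd pp ! j))" if "j \<in> set_pmf (Dpm N (fst pp))" for j
    using good_C[OF assms(1)] good_Dpm[OF assms] that finite_set_nsp by fastforce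
  show ?thesis unfolding Xd_def
    by (intro finite_set_iid_list) (use fD fC in \<open>auto intro!: finite_UN_I\<close>)
qed

lemma support_M:
  assumes "w \<in> set_pmf (learn_pmf n N q \<pi>)"
  shows "fst w \<in> set_pmf (Pd N q \<pi>) \<and> snd w \<in> set_pmf (Xd n N (fst (fst w)) (snd (fst w)))"
  using assms unfolding learn_struct by auto

lemma X_elem:
  assumes "X \<in> set_pmf (Xd n N D C)" "x \<in> set X"
  shows "fst x \<in> set_pmf (Dpm N D) \<and> snd x \<in> set_pmf (C ! fst x)"
proof -
  have "set X \<subseteq> set_pmf (bind_pmf (Dpm N D) (\<lambda>j. bind_pmf (C ! j) (\<lambda>e. return_pmf (j, e))))"
    using set_iid_list[OF assms(1)[unfolded Xd_def]] by simp
  with assms(2) show ?thesis by auto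
qed

lemma nsp_supp_len:
  assumes "length cs = d" "d \<ge> 1" "(z, y) \<in> set_pmf (nsp_component d \<delta> cs)"
  shows "length z < d"
proof (rule ccontr)
  assume "\<not> length z < d"
  hence "pmf (nsp_component d \<delta> cs) (z, y) = 0" using pmf_nsp[OF assms(1,2)] by simp
  thus False using assms(3) by (simp add: set_pmf_iff)
qed

lemma pmf_q0:
  assumes "d \<ge> 1" "length z < d"
  shows "pmf (nsp_component d 1 (replicate d False)) (z, y) = (1/2)^length z * (1/2) / d"
proof -
  have "length (take (length z) (replicate d False)) = length z" using assms by simp
  thus ?thesis using pmf_nsp[of "replicate d False" d 1 z y] assms
    by (simp add: pmf_bsc_list_half pmf_bsc)
qed

lemma q0_pos:
  assumes "length cs = d" "d \<ge> 1" "e \<in> set_pmf (nsp_component d \<delta> cs)"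
  shows "pmf (nsp_component d 1 (replicate d False)) e > 0"
proof -
  obtain z y where e: "e = (z, y)" by (cases e)
  have "length z < d" using nsp_supp_len[OF assms(1,2)] assms(3) e by simp
  thus ?thesis using pmf_q0[OF assms(2)] assms(2) e by simp
qed

lemma hF_lemma:
  assumes cs: "length cs = d" and d: "d \<ge> 1" and dl: "0 \<le> \<delta>" "\<delta> \<le> 1" and N: "N \<ge> 1" and j: "j < N"
  defines "\<nu> \<equiv> pair_pmf (pmf_of_set {..<N}) (nsp_component d 1 (replicate d False))"
  shows "measure_pmf.expectation (nsp_component d \<delta> cs)
       (\<lambda>e. log 2 (pmf (nsp_component d \<delta> cs) e / pmf \<nu> (j, e)))
     = (real d + 1) / 2 * (1 - bin_entropy (\<delta>/2)) + log 2 (real N)"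
proof -
  define A where "A = nsp_component d \<delta> cs"
  define Q0 where "Q0 = nsp_component d 1 (replicate d False)"
  have fA: "finite (set_pmf A)" by (simp add: A_def finite_set_nsp)
  have pnu: "pmf \<nu> (j, e) = pmf Q0 e / N" for e
    using j N unfolding \<nu>_def Q0_def by (simp add: pmf_pair lessThan_empty_iff)
  have "measure_pmf.expectation A (\<lambda>e. log 2 (pmf A e / pmf \<nu> (j, e)))
      = measure_pmf.expectation A (\<lambda>e. log 2 (pmf A e / pmf Q0 e) + log 2 (real N))"
  proof (rule expectation_cong_supp)
    fix e assume e: "e \<in> set_pmf A"
    have a: "pmf A e > 0" using e by (simp add: pmf_positive)
    have b: "pmf Q0 e > 0" using q0_pos[OF cs d] e by (simp add: A_def Q0_def)
    have eq: "pmf A e / pmf \<nu> (j, e) = (pmf A e / pmf Q0 e) * real N"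
      unfolding pnu using N by (simp add: field_simps)
    have "log 2 ((pmf A e / pmf Q0 e) * real N) = log 2 (pmf A e / pmf Q0 e) + log 2 (real N)"
      using a b N by (intro log_mult_pos) auto
    thus "log 2 (pmf A e / pmf \<nu> (j, e)) = log 2 (pmf A e / pmf Q0 e) + log 2 (real N)"
      unfolding eq .
  qed
  also have "\<dots> = measure_pmf.expectation A (\<lambda>e. log 2 (pmf A e / pmf Q0 e)) + log 2 (real N)"
    by (subst Bochner_Integration.integral_add) (simp_all add: integrable_measure_pmf_finite[OF fA])
  also have "measure_pmf.expectation A (\<lambda>e. log 2 (pmf A e / pmf Q0 e)) = (real d + 1) / 2 * (1 - bin_entropy (\<delta>/2))"
    unfolding A_def Q0_def by (rule kl_nsp[OF cs d dl])
  finally show ?thesis unfolding A_def .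
qed

lemma pmf_set_iid_lower:
  assumes "finite s"
  shows "pmf (map_pmf set (iid_list (card s) \<nu>)) s \<ge> (\<Prod>x\<in>s. pmf \<nu> x)"
proof -
  obtain xs where xs: "set xs = s" "distinct xs" using finite_distinct_list[OF assms] by blast
  have len: "length xs = card s" using xs distinct_card by metis
  have "(\<Prod>x\<in>s. pmf \<nu> x) = prod_list (map (pmf \<nu>) xs)"
    using xs by (metis prod.distinct_set_conv_list)
  also have "\<dots> = pmf (iid_list (card s) \<nu>) xs" using pmf_iid_list[of xs \<nu>] len by simp
  also have "\<dots> = measure (measure_pmf (iid_list (card s) \<nu>)) {xs}" by (simp add: measure_pmf_single)
  also have "\<dots> \<le> measure (measure_pmf (iid_list (card s) \<nu>)) (set -` {s})"
    using xs by (intro measure_pmf.finite_measure_mono) auto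
  also have "\<dots> = pmf (map_pmf set (iid_list (card s) \<nu>)) s" by (simp add: pmf_map)
  finally show ?thesis .
qed

lemma log_prod_pos:
  assumes "finite A" "\<And>x. x \<in> A \<Longrightarrow> f x > 0"
  shows "log b (\<Prod>x\<in>A. f x) = (\<Sum>x\<in>A. log b (f x))"
proof -
  have "ln (\<Prod>x\<in>A. f x) = (\<Sum>x\<in>A. ln (f x))" using assms by (intro ln_prod) force+
  thus ?thesis unfolding log_def by (simp add: sum_divide_distrib)
qed

theorem lemma3p1:
  fixes n N d :: nat and \<delta> :: real and \<pi> :: "real list"
  assumes "n \<ge> 1" and "N \<ge> 1" and "d \<ge> 1"
    and "0 \<le> \<delta>" and "\<delta> < 1"
    and "\<pi> \<noteq> []" and "\<forall>x\<in>set \<pi>. x > 0"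
  shows "let M = learn_pmf n N (q_NSP d \<delta>) \<pi>;
             K = (\<lambda>w. card (singletons (snd w)));
             \<mu>\<^sub>1 = measure_pmf.expectation M (\<lambda>w. real (K w)) / real n
         in cond_mutual_info 2 M (\<lambda>w. singletons (snd w)) fst K
            \<le> \<mu>\<^sub>1 * real n * ((real d + 1) / 2) * (1 - bin_entropy (\<delta> / 2))
               + \<mu>\<^sub>1 * real n * log 2 (real N)"
proof -
  note n1 = assms(1) and N1 = assms(2) and d1 = assms(3) and dl = assms(4) and dl2 = assms(5)
  define M where "M = learn_pmf n N (q_NSP d \<delta>) \<pi>"
  define K where "K = (\<lambda>w::(real list \<times> (bool list \<times> bool) pmf list) \<times> (nat \<times> bool list \<times> bool) list. card (singletons (snd w)))"
  define S where "S = (\<lambda>w::(real list \<times> (bool list \<times> bool) pmf list) \<times> (nat \<times> bool list \<times> bool) list. singletons (snd w))"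
  define q0 where "q0 = nsp_component d 1 (replicate d False)"
  define \<nu> where "\<nu> = pair_pmf (pmf_of_set {..<N}) q0"
  define Qd where "Qd = (\<lambda>k::nat. map_pmf set (iid_list k \<nu>))"
  define R where "R = (\<lambda>(s::(nat \<times> bool list \<times> bool) set) (pp::real list \<times> (bool list \<times> bool) pmf list) (k::nat).
                        \<Prod>x\<in>s. pmf (snd pp ! fst x) (snd x))"
  define F where "F = (\<lambda>(C::(bool list \<times> bool) pmf list) (x::nat \<times> bool list \<times> bool). log 2 (pmf (C ! fst x) (snd x) / pmf \<nu> x))"
  define A where "A = (real d + 1) / 2 * (1 - bin_entropy (\<delta> / 2))"
  define c where "c = A + log 2 (real N)"
  define PD where "PD = Pd N (q_NSP d \<delta>) \<pi>"
  define XD where "XD = (\<lambda>pp::real list \<times> (bool list \<times> bool) pmf list. Xd n N (fst pp) (snd pp))"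
  have Mstruct: "M = bind_pmf PD (\<lambda>pp. map_pmf (Pair pp) (XD pp))"
    unfolding M_def PD_def XD_def by (rule learn_struct)
  have goodPD: "good N d \<delta> pp" if "pp \<in> set_pmf PD" for pp
    using Pd_good[OF N1 assms(6) assms(7)] that unfolding PD_def by blast
  have finPD: "finite (set_pmf PD)" unfolding PD_def by (rule finite_Pd[OF assms(6)])
  have finXD: "finite (set_pmf (XD pp))" if "pp \<in> set_pmf PD" for pp
    unfolding XD_def by (rule finite_Xd[OF goodPD[OF that] N1])
  have suppM: "fst w \<in> set_pmf PD \<and> snd w \<in> set_pmf (XD (fst w))" if "w \<in> set_pmf M" for w
    using that unfolding Mstruct by auto
  have finM: "finite (set_pmf M)"
    unfolding Mstruct using finPD finXD by (auto intro!: finite_UN_I)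
  have elem: "fst x < N \<and> snd x \<in> set_pmf (snd (fst w) ! fst x) \<and>
      (\<exists>cs. length cs = d \<and> snd (fst w) ! fst x = nsp_component d \<delta> cs)"
    if w: "w \<in> set_pmf M" and x: "x \<in> S w" for w x
  proof -
    have g: "good N d \<delta> (fst w)" using goodPD suppM[OF w] by blast
    have xX: "x \<in> set (snd w)" using x unfolding S_def singletons_def by auto
    have "fst x \<in> set_pmf (Dpm N (fst (fst w))) \<and> snd x \<in> set_pmf (snd (fst w) ! fst x)"
      using X_elem[OF suppM[OF w, THEN conjunct2, unfolded XD_def] xX] .
    moreover have "fst x < N" using calculation good_Dpm[OF g N1] by auto
    ultimately show ?thesis using good_C[OF g] by blast
  qed
  have finS: "finite (S w)" for w
    unfolding S_def singletons_def by simp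
  have nupos: "pmf \<nu> x > 0" if "w \<in> set_pmf M" "x \<in> S w" for w x
  proof -
    from elem[OF that] obtain cs where x: "fst x < N" "snd x \<in> set_pmf (snd (fst w) ! fst x)"
      "length cs = d" "snd (fst w) ! fst x = nsp_component d \<delta> cs" by blast
    have "pmf q0 (snd x) > 0" unfolding q0_def using q0_pos[OF x(3) d1] x(2,4) by simp
    moreover have "pmf (pmf_of_set {..<N}) (fst x) > 0" using x(1) by (simp add: lessThan_empty_iff)
    ultimately show ?thesis unfolding \<nu>_def by (cases x) (simp add: pmf_pair)
  qed
  have Rpos: "R (S w) (fst w) (K w) > 0" if w: "w \<in> set_pmf M" for w
    unfolding R_def using elem[OF w] by (auto intro!: prod_pos simp: pmf_positive)
  have Qlow: "pmf (Qd (K w)) (S w) \<ge> (\<Prod>x\<in>S w. pmf \<nu> x)" for w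
    unfolding Qd_def K_def using pmf_set_iid_lower[OF finS[of w], of \<nu>] by (simp add: S_def)
  have Ppos: "(\<Prod>x\<in>S w. pmf \<nu> x) > 0" if w: "w \<in> set_pmf M" for w
    using nupos[OF w] by (intro prod_pos) auto
  have Qpos: "pmf (Qd (K w)) (S w) > 0" if w: "w \<in> set_pmf M" for w
    using Qlow[of w] Ppos[OF w] by linarith
  have Rbound: "pmf (map_pmf (\<lambda>w. (S w, fst w, K w)) M) (S w, fst w, K w)
      \<le> R (S w) (fst w) (K w) * pmf (map_pmf (\<lambda>w. (fst w, K w)) M) (fst w, K w)"
    if w: "w \<in> set_pmf M" for w
  proof -
    define pp where "pp = fst w"
    define s where "s = S w"
    have Kw: "K w = card s" unfolding s_def S_def K_def ..
    have e1: "pmf (map_pmf (\<lambda>w. (S w, fst w, K w)) M) (S w, fst w, K w)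
        = pmf PD pp * measure (measure_pmf (XD pp)) {X. singletons X = s}"
    proof -
      have "pmf (map_pmf (\<lambda>w. (S w, fst w, K w)) M) (S w, fst w, K w)
          = measure (measure_pmf M) {w'. fst w' = pp \<and> singletons (snd w') = s}"
        unfolding pmf_map Kw[symmetric] unfolding pp_def s_def
        by (intro arg_cong[where f="measure (measure_pmf M)"]) (auto simp: S_def K_def)
      also have "\<dots> = pmf PD pp * measure (measure_pmf (XD pp)) {X. singletons X = s}"
        unfolding Mstruct by (rule measure_fst)
      finally show ?thesis .
    qed
    have e2: "pmf (map_pmf (\<lambda>w. (fst w, K w)) M) (fst w, K w)
        = pmf PD pp * measure (measure_pmf (XD pp)) {X. card (singletons X) = card s}"
    proof -
      have "pmf (map_pmf (\<lambda>w. (fst w, K w)) M) (fst w, K w)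
          = measure (measure_pmf M) {w'. fst w' = pp \<and> card (singletons (snd w')) = card s}"
        unfolding pmf_map Kw unfolding pp_def
        by (intro arg_cong[where f="measure (measure_pmf M)"]) (auto simp: K_def)
      also have "\<dots> = pmf PD pp * measure (measure_pmf (XD pp)) {X. card (singletons X) = card s}"
        unfolding Mstruct by (rule measure_fst)
      finally show ?thesis .
    qed
    have sb: "measure (measure_pmf (XD pp)) {X. singletons X = s}
       \<le> R s pp (K w) * measure (measure_pmf (XD pp)) {X. card (singletons X) = card s}"
      unfolding XD_def Xd_def R_def by (rule S_bound)
    show ?thesis unfolding e1 e2 using sb
      by (simp add: pp_def s_def mult.left_commute mult_left_mono)
  qed
  have step2: "cond_mutual_info 2 M S fst K \<le>
      measure_pmf.expectation M (\<lambda>w. log 2 (R (S w) (fst w) (K w) / pmf (Qd (K w)) (S w)))"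
    by (rule cmi_bound[OF finM _ Rpos Rbound Qpos]) simp_all
  have step3: "measure_pmf.expectation M (\<lambda>w. log 2 (R (S w) (fst w) (K w) / pmf (Qd (K w)) (S w)))
      \<le> measure_pmf.expectation M (\<lambda>w. \<Sum>x\<in>S w. F (snd (fst w)) x)"
  proof -
    have "measure_pmf.expectation M (\<lambda>w. log 2 (R (S w) (fst w) (K w) / pmf (Qd (K w)) (S w)))
      = (\<Sum>w\<in>set_pmf M. pmf M w * log 2 (R (S w) (fst w) (K w) / pmf (Qd (K w)) (S w)))"
      by (rule expectation_finite[OF finM])
    also have "\<dots> \<le> (\<Sum>w\<in>set_pmf M. pmf M w * (\<Sum>x\<in>S w. F (snd (fst w)) x))"
    proof (intro sum_mono mult_left_mono)
      fix w assume w: "w \<in> set_pmf M"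
      define P where "P = (\<Prod>x\<in>S w. pmf \<nu> x)"
      have r: "R (S w) (fst w) (K w) > 0" by (rule Rpos[OF w])
      have p: "P > 0" unfolding P_def by (rule Ppos[OF w])
      have qp: "pmf (Qd (K w)) (S w) \<ge> P" unfolding P_def by (rule Qlow)
      have "R (S w) (fst w) (K w) / pmf (Qd (K w)) (S w) \<le> R (S w) (fst w) (K w) / P"
        using r p qp by (intro divide_left_mono) auto
      hence "log 2 (R (S w) (fst w) (K w) / pmf (Qd (K w)) (S w)) \<le> log 2 (R (S w) (fst w) (K w) / P)"
        using r p qp by (subst log_le_cancel_iff) auto
      also have "R (S w) (fst w) (K w) / P = (\<Prod>x\<in>S w. pmf (snd (fst w) ! fst x) (snd x) / pmf \<nu> x)"
        unfolding R_def P_def by (simp add: prod_dividef)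
      also have "log 2 \<dots> = (\<Sum>x\<in>S w. F (snd (fst w)) x)"
        unfolding F_def
      proof (rule log_prod_pos[OF finS])
        fix x assume x: "x \<in> S w"
        have "pmf (snd (fst w) ! fst x) (snd x) > 0" using elem[OF w x] by (simp add: pmf_positive)
        thus "pmf (snd (fst w) ! fst x) (snd x) / pmf \<nu> x > 0" using nupos[OF w x] by simp
      qed
      finally show "log 2 (R (S w) (fst w) (K w) / pmf (Qd (K w)) (S w)) \<le> (\<Sum>x\<in>S w. F (snd (fst w)) x)" .
    qed simp
    also have "\<dots> = measure_pmf.expectation M (\<lambda>w. \<Sum>x\<in>S w. F (snd (fst w)) x)"
      by (rule expectation_finite[OF finM, symmetric])
    finally show ?thesis .
  qed
  have step4: "measure_pmf.expectation M (\<lambda>w. \<Sum>x\<in>S w. F (snd (fst w)) x)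
      = c * measure_pmf.expectation M (\<lambda>w. real (K w))"
  proof -
    have fin': "finite (set_pmf (map_pmf (Pair pp) (XD pp)))" if "pp \<in> set_pmf PD" for pp
      using finXD[OF that] by simp
    have inner: "measure_pmf.expectation (XD pp) (\<lambda>X. \<Sum>x\<in>singletons X. F (snd pp) x)
        = c * measure_pmf.expectation (XD pp) (\<lambda>X. real (card (singletons X)))"
      if pp: "pp \<in> set_pmf PD" for pp
    proof -
      have g: "good N d \<delta> pp" by (rule goodPD[OF pp])
      have fD: "finite (set_pmf (Dpm N (fst pp)))" using good_Dpm[OF g N1] finite_subset by blast
      show ?thesis unfolding XD_def Xd_def
      proof (rule S_expect[OF fD])
        fix j assume j: "j \<in> set_pmf (Dpm N (fst pp))"
        have jN: "j < N" using j good_Dpm[OF g N1] by auto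
        obtain cs where cs: "length cs = d" "snd pp ! j = nsp_component d \<delta> cs"
          using good_C[OF g jN] by blast
        show "finite (set_pmf (snd pp ! j))" using cs by (simp add: finite_set_nsp)
        show "measure_pmf.expectation (snd pp ! j) (\<lambda>e. F (snd pp) (j, e)) = c"
          unfolding F_def c_def A_def \<nu>_def q0_def using cs hF_lemma[OF cs(1) d1 dl _ N1 jN] dl2 by simp
      qed
    qed
    have "measure_pmf.expectation M (\<lambda>w. \<Sum>x\<in>S w. F (snd (fst w)) x)
        = measure_pmf.expectation PD (\<lambda>pp. measure_pmf.expectation (map_pmf (Pair pp) (XD pp)) (\<lambda>w. \<Sum>x\<in>S w. F (snd (fst w)) x))"
      unfolding Mstruct by (rule integral_bind_pmf_fin[OF finPD fin'])
    also have "\<dots> = measure_pmf.expectation PD (\<lambda>pp. c * measure_pmf.expectation (XD pp) (\<lambda>X. real (card (singletons X))))"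
      by (rule expectation_cong_supp) (simp add: S_def inner)
    also have "\<dots> = c * measure_pmf.expectation PD (\<lambda>pp. measure_pmf.expectation (XD pp) (\<lambda>X. real (card (singletons X))))"
      by simp
    also have "measure_pmf.expectation PD (\<lambda>pp. measure_pmf.expectation (XD pp) (\<lambda>X. real (card (singletons X))))
        = measure_pmf.expectation M (\<lambda>w. real (K w))"
      unfolding Mstruct by (subst integral_bind_pmf_fin[OF finPD fin']) (simp_all add: K_def)
    finally show ?thesis .
  qed
  have main: "cond_mutual_info 2 M S fst K \<le> c * measure_pmf.expectation M (\<lambda>w. real (K w))"
    using step2 step3 step4 by linarith
  have n0: "real n \<noteq> 0" using n1 by simp
  show ?thesis
    unfolding Let_def M_def[symmetric] K_def[symmetric] S_def[symmetric]
    using main n0 by (simp add: c_def A_def algebra_simps)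
qed

end
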